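(* Let $\beta \in \mathcal{P}$ and $\alpha \in E$ satisfy $\alpha^{q+1} = \beta^q + \beta^{q^2+q+1}$, and let $\lambda \in S$. Then the system of equations $$X^{q+1} + \alpha X + \beta = 0, \qquad X^{q^2+1} = \lambda$$ has at most two solutions in $\mathcal{P}$. (In particular, taking $\lambda = 1$, every line of the cyclic presentation of $PG(3,q)$ meets $\mathcal{O}$ in at most two points, so $\mathcal{O}$ is an ovoid of the cyclic presentation of $PG(3,q)$.)
   Context: Let $q = 2^m$, and let $E = \mathbb{F}_{q^4} \supset K = \mathbb{F}_{q^2} \supset F = \mathbb{F}_q$. Define $\mathcal{P} = \{x \in E \mid x^{q^3+q^2+q+1} = 1\}$, $\mathcal{O} = \{x \in E \mid x^{q^2+1} = 1\}$ and $S = \{x \in K \mid x^{q+1} = 1\}$. The cyclic presentation of $PG(3,q)$ has point set $\mathcal{P}$. Its lines are the sets of zeros in $\mathcal{P}$ of polynomials $X^{q+1} + \alpha X + \beta$, where $\beta \in \mathcal{P}$ and $\alpha \in E$ satisfy $\alpha^{q+1} = \beta^q + \beta^{q^2+q+1}$; each such line has $q+1$ points. An ovoid is a set of $q^2+1$ points meeting every line in at most two points. *)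

theory Defs
  imports Main "HOL-Library.Cardinality"
begin

text \<open>The field E = GF(q^4) is modelled as a finite field type 'a with CARD('a) = q^4.
  Subsets of E used in the paper, parametrised by q.\<close>

definition cycP :: "nat \<Rightarrow> ('a::field) set" where
  "cycP q = {x. x ^ (q^3 + q^2 + q + 1) = 1}"

definition subfieldK :: "nat \<Rightarrow> ('a::field) set" where
  "subfieldK q = {x. x ^ (q^2) = x}"

definition cycS :: "nat \<Rightarrow> ('a::field) set" where
  "cycS q = {x \<in> subfieldK q. x ^ (q + 1) = 1}"

end

theory Submission
  imports Defs
begin

lemma card_quad_le2:
  fixes a b c :: "'a::field"
  assumes "a \<noteq> 0" and "\<And>x. x \<in> X \<Longrightarrow> a * x^2 + b * x + c = 0" and "finite X"
  shows "card X \<le> 2"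
proof (rule ccontr)
  assume "\<not> card X \<le> 2"
  then have "3 \<le> card X" by simp
  then obtain T where "T \<subseteq> X" "card T = 3" by (meson obtain_subset_with_card_n)
  then obtain x y z where T: "T = {x,y,z}" "x \<noteq> y" "y \<noteq> z" "x \<noteq> z" by (auto simp: card_3_iff)
  have ex: "a * x^2 + b * x + c = 0" and ey: "a * y^2 + b * y + c = 0" and ez: "a * z^2 + b * z + c = 0"
    using assms(2) \<open>T \<subseteq> X\<close> T by auto
  have "(x - y) * (a * (x + y) + b) = (a * x^2 + b * x + c) - (a * y^2 + b * y + c)"
    by (simp add: algebra_simps power2_eq_square)
  then have "(x - y) * (a * (x + y) + b) = 0" using ex ey by simp
  with T have 1: "a * (x + y) + b = 0" by simp
  have "(x - z) * (a * (x + z) + b) = (a * x^2 + b * x + c) - (a * z^2 + b * z + c)"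
    by (simp add: algebra_simps power2_eq_square)
  then have "(x - z) * (a * (x + z) + b) = 0" using ex ez by simp
  with T have 2: "a * (x + z) + b = 0" by simp
  have "a * (y - z) = (a * (x + y) + b) - (a * (x + z) + b)" by (simp add: algebra_simps)
  then have "a * (y - z) = 0" using 1 2 by simp
  with assms(1) T show False by simp
qed

lemma char2:
  assumes "CARD('a::{field,finite}) = 2 ^ k"
  shows "(1::'a) + 1 = 0"
proof -
  have "(\<Sum>x\<in>(UNIV::'a set). x + 1) = (\<Sum>x\<in>UNIV. x)"
  proof -
    have "(\<Sum>x\<in>(UNIV::'a set). x + 1) = (\<Sum>x\<in>(\<lambda>x. x + 1) ` UNIV. x)"
      by (subst sum.reindex) (auto simp: inj_on_def)
    also have "(\<lambda>x::'a. x + 1) ` UNIV = UNIV"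
      by (auto intro!: image_eqI[where x="_ - 1"])
    finally show ?thesis .
  qed
  then have "of_nat CARD('a) = (0::'a)" by (simp add: sum.distrib)
  then have "(2::'a) ^ k = 0" using assms by simp
  then show ?thesis by simp
qed

lemma frob:
  assumes "(1::'a::field) + 1 = 0"
  shows "((a::'a) + b) ^ (2 ^ k) = a ^ (2 ^ k) + b ^ (2 ^ k)"
proof (induction k)
  case 0 then show ?case by simp
next
  case (Suc k)
  have sq: "(u + v) ^ 2 = u^2 + v^2" for u v :: 'a
  proof -
    have "(u + v) ^ 2 = u^2 + v^2 + (1 + 1) * u * v" by (simp add: algebra_simps power2_eq_square)
    then show ?thesis using assms by simp
  qed
  have "(a + b) ^ (2 ^ Suc k) = ((a + b) ^ (2 ^ k)) ^ 2" by (simp add: power_mult[symmetric] mult.commute)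
  also have "\<dots> = (a ^ (2 ^ k)) ^ 2 + (b ^ (2 ^ k)) ^ 2" using Suc sq by simp
  also have "\<dots> = a ^ (2 ^ Suc k) + b ^ (2 ^ Suc k)" by (simp add: power_mult[symmetric] mult.commute)
  finally show ?case .
qed

theorem theorem3p2:
  fixes m q :: nat and \<alpha> \<beta> lam :: "'a::{field,finite}"
  assumes "q = 2 ^ m"
    and "CARD('a) = q ^ 4"
    and "\<beta> \<in> cycP q"
    and "\<alpha> ^ (q + 1) = \<beta> ^ q + \<beta> ^ (q^2 + q + 1)"
    and "lam \<in> cycS q"
  shows "card {x \<in> cycP q. x ^ (q + 1) + \<alpha> * x + \<beta> = 0 \<and> x ^ (q^2 + 1) = lam} \<le> 2"
proof -
  have c2: "(1::'a) + 1 = 0" using char2[of "m*4"] assms(1,2) by (simp add: power_mult)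
  have neg: "- u = u" for u :: 'a
  proof -
    have "u + u = (1 + 1) * u" by (simp add: algebra_simps)
    then have "u + u = 0" using c2 by simp
    then show ?thesis by (simp add: add_eq_0_iff2)
  qed
  have fq: "(u + v) ^ q = u ^ q + v ^ q" for u v :: 'a using frob[OF c2] assms(1) by simp
  have fq2: "(u + v) ^ (q^2) = u ^ (q^2) + v ^ (q^2)" for u v :: 'a
    using frob[OF c2, of u v "m*2"] assms(1) by (simp add: power_mult)
  have qpos: "q > 0" using assms(1) by simp
  have bnz: "\<beta> \<noteq> 0" using assms(3) qpos by (auto simp: cycP_def)
  have lnz: "lam \<noteq> 0" and l1: "lam ^ (q + 1) = 1" using assms(5) by (auto simp: cycS_def)
  define A where "A = (if \<alpha> = 0 then \<beta> ^ q else \<beta> ^ (q^2) * \<alpha>)"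
  define B where "B = (if \<alpha> = 0 then 0 else 1 + \<beta>^(q^2) * \<beta> + \<alpha>^(q^2) * lam * \<alpha>)"
  define C where "C = (if \<alpha> = 0 then lam * \<beta> else \<alpha>^(q^2) * lam * \<beta>)"
  have Anz: "A \<noteq> 0" using bnz by (simp add: A_def)
  show ?thesis
  proof (rule card_quad_le2[OF Anz, where b=B and c=C])
    show "finite {x \<in> cycP q. x ^ (q + 1) + \<alpha> * x + \<beta> = 0 \<and> x ^ (q^2 + 1) = lam}" by simp
  next
    fix x assume "x \<in> {x \<in> cycP q. x ^ (q + 1) + \<alpha> * x + \<beta> = 0 \<and> x ^ (q^2 + 1) = lam}"
    then have E1: "x ^ (q + 1) + \<alpha> * x + \<beta> = 0" and E2: "x ^ (q^2 + 1) = lam" by auto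
    define y where "y = x ^ q"
    define z where "z = y ^ q"
    have xq2: "x ^ (q^2) = z" by (simp add: y_def z_def power2_eq_square power_mult)
    have e1: "x * y + \<alpha> * x + \<beta> = 0" using E1 by (simp add: y_def mult.commute)
    have e2: "z * x = lam" using E2 xq2 by (simp add: mult.commute)
    show "A * x^2 + B * x + C = 0"
    proof (cases "\<alpha> = 0")
      case True
      have "x * y = \<beta>" using e1 True neg by (simp add: add_eq_0_iff2)
      then have "(x * y) ^ q = \<beta> ^ q" by simp
      then have "y * z = \<beta> ^ q" by (simp add: y_def z_def power_mult_distrib)
      then have h1: "x * (y * z) = \<beta> ^ q * x" by simp
      have "lam * y = (z * x) * y" using e2 by simp
      also have "\<dots> = x * (y * z)" by (simp add: algebra_simps)
      finally have "lam * y = \<beta> ^ q * x" using h1 by simp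
      then have "lam * (x * y) = \<beta> ^ q * x^2" by (simp add: algebra_simps power2_eq_square)
      then have "lam * \<beta> = \<beta> ^ q * x^2" using \<open>x * y = \<beta>\<close> by simp
      have "\<beta> ^ q * x^2 + lam * \<beta> = (1 + 1) * (lam * \<beta>)" using \<open>lam * \<beta> = \<beta> ^ q * x^2\<close>
        by (simp add: algebra_simps)
      then have "\<beta> ^ q * x^2 + lam * \<beta> = 0" using c2 by simp
      then show ?thesis using True by (simp add: A_def B_def C_def)
    next
      case False
      have "(x * y + \<alpha> * x + \<beta>) ^ (q^2) = 0" using e1 qpos by simp
      moreover have "(x * y + \<alpha> * x + \<beta>) ^ (q^2) = (x*y)^(q^2) + (\<alpha> * x)^(q^2) + \<beta>^(q^2)"
        by (simp add: fq2)
      moreover have "y ^ (q^2) = z^q" by (simp add: z_def power2_eq_square power_mult)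
      ultimately have f: "z^q * z + \<alpha>^(q^2) * z + \<beta>^(q^2) = 0"
        by (simp add: power_mult_distrib xq2 mult.commute)
      have zq: "z^q * y = lam ^ q" using e2
        by (metis power_mult_distrib y_def)
      have "(z^q * z + \<alpha>^(q^2) * z + \<beta>^(q^2)) * (x * y) = 0" using f by simp
      then have "(z^q * y) * (z * x) + \<alpha>^(q^2) * (z * x) * y + \<beta>^(q^2) * (x * y) = 0"
        by (simp add: algebra_simps)
      then have "lam^q * lam + \<alpha>^(q^2) * lam * y + \<beta>^(q^2) * (x * y) = 0"
        using zq e2 by simp
      then have g: "1 + \<alpha>^(q^2) * lam * y + \<beta>^(q^2) * (x * y) = 0" using l1 by (simp add: mult.commute)
      have xy: "x * y = \<alpha> * x + \<beta>" using e1 neg by (simp add: add_eq_0_iff2 add.assoc)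
      have g': "1 + \<alpha>^(q^2) * lam * y + \<beta>^(q^2) * (\<alpha> * x + \<beta>) = 0" using g xy by simp
      have bb: "u + u = 0" for u :: 'a
      proof -
        have "u + u = (1 + 1) * u" by (simp add: algebra_simps)
        then show ?thesis using c2 by simp
      qed
      have g2: "\<alpha>^(q^2) * lam * y = 1 + \<beta>^(q^2) * (\<alpha> * x + \<beta>)"
      proof -
        let ?P = "\<alpha>^(q^2) * lam * y" and ?Q = "\<beta>^(q^2) * (\<alpha> * x + \<beta>)"
        have "(1 + ?P + ?Q) + (1 + ?Q) = ?P + (1 + 1) + (?Q + ?Q)" by (simp add: algebra_simps)
        then have "(1 + ?P + ?Q) + (1 + ?Q) = ?P" using c2 bb[of ?Q] by simp
        then show ?thesis using g' by simp
      qed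
      have "\<alpha>^(q^2) * lam * (x * y + \<alpha> * x + \<beta>) = 0" using e1 by simp
      then have "x * (\<alpha>^(q^2) * lam * y) + \<alpha>^(q^2) * lam * \<alpha> * x + \<alpha>^(q^2) * lam * \<beta> = 0"
        by (simp add: algebra_simps)
      then have "x * (1 + \<beta>^(q^2) * (\<alpha> * x + \<beta>)) + \<alpha>^(q^2) * lam * \<alpha> * x + \<alpha>^(q^2) * lam * \<beta> = 0"
        using g2 by simp
      then show ?thesis using False by (simp add: A_def B_def C_def algebra_simps power2_eq_square)
    qed
  qed
qed

end
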